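(* Let $n\ge1$ and $A=(A_1,\dots,A_n)\in V_n$. The following are equivalent: (i) $A$ is stable; (ii) there exist $1\le j,k,l\le n$ such that $(A_j,A_k,A_l)\in V_3$ is stable; (iii) there exist $1\le j,k,l\le n$ such that $\sigma_{jk}(A)\neq0$ or $\Delta_{jkl}(A)\neq0$; (iv) $A$ is not similar to an upper triangular $n$-matrix; (v) there is no proper nonzero subspace of $\mathbb{C}^2$ preserved by all of $A_1,\dots,A_n$.
   Context: $V_n=(M_{2\times2}(\mathbb{C}))^{\times n}$ with $SL(2,\mathbb{C})$ acting by simultaneous conjugation; a point is stable if its orbit map $g\mapsto g\cdot x$ from $SL(2,\mathbb{C})$ is proper. Similar means in the same $GL(2,\mathbb{C})$-orbit under simultaneous conjugation; an upper triangular $n$-matrix has all components upper triangular. With $t_j=\mathsf{tr}(A_j)$, $t_{jk}=\mathsf{tr}(A_jA_k)$, $t_{jkl}=\mathsf{tr}(A_jA_kA_l)$, define $\tau_{jk}=t_{jk}-\tfrac12t_jt_k$, $\sigma_{jk}=\tau_{jk}^2-\tau_{jj}\tau_{kk}$ and $\Delta_{jkl}=(t_{jkl}-t_{lkj})^2$. *)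

theory Defs
  imports "HOL-Analysis.Analysis"
begin

text \<open>2x2 complex matrices are \<open>complex^2^2\<close>; \<open>A $ i $ j\<close> is the entry in row i, column j.
  The space V_n of n-tuples of such matrices is \<open>complex^2^2^'n\<close> for a finite index type 'n
  with n = CARD('n).\<close>

definition SL2 :: "(complex^2^2) set" where
  "SL2 = {g. det g = 1}"

definition conj_act :: "complex^2^2 \<Rightarrow> complex^2^2^'n \<Rightarrow> complex^2^2^'n" where
  "conj_act g A = (\<chi> i. g ** (A $ i) ** matrix_inv g)"

definition stable :: "complex^2^2^'n \<Rightarrow> bool" where
  "stable A \<longleftrightarrow> proper_map (top_of_set SL2) euclidean (\<lambda>g. conj_act g A)"

definition upper_triangular2 :: "complex^2^2 \<Rightarrow> bool" where
  "upper_triangular2 M \<longleftrightarrow> M $ 2 $ 1 = 0"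

definition similar_to_upper_triangular :: "complex^2^2^'n \<Rightarrow> bool" where
  "similar_to_upper_triangular A \<longleftrightarrow>
     (\<exists>P. invertible P \<and> (\<forall>i. upper_triangular2 (P ** (A $ i) ** matrix_inv P)))"

definition t1 :: "complex^2^2^'n \<Rightarrow> 'n \<Rightarrow> complex" where
  "t1 A j = trace (A $ j)"

definition t2 :: "complex^2^2^'n \<Rightarrow> 'n \<Rightarrow> 'n \<Rightarrow> complex" where
  "t2 A j k = trace (A $ j ** A $ k)"

definition t3 :: "complex^2^2^'n \<Rightarrow> 'n \<Rightarrow> 'n \<Rightarrow> 'n \<Rightarrow> complex" where
  "t3 A j k l = trace (A $ j ** A $ k ** A $ l)"

definition tau :: "complex^2^2^'n \<Rightarrow> 'n \<Rightarrow> 'n \<Rightarrow> complex" where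
  "tau A j k = t2 A j k - t1 A j * t1 A k / 2"

definition sigma :: "complex^2^2^'n \<Rightarrow> 'n \<Rightarrow> 'n \<Rightarrow> complex" where
  "sigma A j k = (tau A j k)^2 - tau A j j * tau A k k"

definition Delta :: "complex^2^2^'n \<Rightarrow> 'n \<Rightarrow> 'n \<Rightarrow> 'n \<Rightarrow> complex" where
  "Delta A j k l = (t3 A j k l - t3 A l k j)^2"

definition triple :: "complex^2^2^'n \<Rightarrow> 'n \<Rightarrow> 'n \<Rightarrow> 'n \<Rightarrow> complex^2^2^3" where
  "triple A j k l = (\<chi> i. if i = 1 then A $ j else if i = 2 then A $ k else A $ l)"

definition has_invariant_line :: "complex^2^2^'n \<Rightarrow> bool" where
  "has_invariant_line A \<longleftrightarrow>
     (\<exists>W :: (complex^2) set. vec.subspace W \<and> W \<noteq> {0} \<and> W \<noteq> UNIV \<and>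
        (\<forall>i. \<forall>v\<in>W. (A $ i) *v v \<in> W))"

end

theory Submission
  imports Defs
begin

definition dv :: "complex^2 \<Rightarrow> complex^2 \<Rightarrow> complex" where
  "dv v w = v$1*w$2 - v$2*w$1"

definition cev :: "complex^2^2^'n \<Rightarrow> complex^2 \<Rightarrow> bool" where
  "cev A v \<longleftrightarrow> v \<noteq> 0 \<and> (\<forall>i. dv v (A$i *v v) = 0)"

definition minv2 :: "complex^2^2 \<Rightarrow> complex^2^2" where
  "minv2 M = (\<chi> i j. (if i=1 then (if j=1 then M$2$2 else -M$1$2)
                       else (if j=1 then -M$2$1 else M$1$1)) / det M)"

definition v2 :: "complex \<Rightarrow> complex \<Rightarrow> complex^2" where
  "v2 x y = (\<chi> i. if i = 1 then x else y)"

definition m2 :: "complex \<Rightarrow> complex \<Rightarrow> complex \<Rightarrow> complex \<Rightarrow> complex^2^2" where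
  "m2 a b c d = (\<chi> i j. if i=1 then (if j=1 then a else b) else (if j=1 then c else d))"

lemma v2_simps[simp]: "v2 x y $ 1 = x" "v2 x y $ 2 = y"
  by (simp_all add: v2_def)

lemma m2_simps[simp]: "m2 a b c d $1$1 = a" "m2 a b c d $1$2 = b"
  "m2 a b c d $2$1 = c" "m2 a b c d $2$2 = d"
  by (simp_all add: m2_def)

lemma minv2_simps[simp]:
  "minv2 M $1$1 = M$2$2 / det M" "minv2 M $1$2 = - M$1$2 / det M"
  "minv2 M $2$1 = - M$2$1 / det M" "minv2 M $2$2 = M$1$1 / det M"
  by (simp_all add: minv2_def)

lemma vec2_eq: "(x::complex^2) = y \<longleftrightarrow> x$1 = y$1 \<and> x$2 = y$2"
  by (simp add: vec_eq_iff forall_2)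

lemma mat2_eq: "(x::complex^2^2) = y \<longleftrightarrow> x$1$1 = y$1$1 \<and> x$1$2 = y$1$2 \<and> x$2$1 = y$2$1 \<and> x$2$2 = y$2$2"
  by (auto simp add: vec_eq_iff forall_2)

lemma vec2_nz: "(x::complex^2) \<noteq> 0 \<longleftrightarrow> x$1 \<noteq> 0 \<or> x$2 \<noteq> 0"
  by (auto simp add: vec2_eq)

lemmas ent = matrix_matrix_mult_def matrix_vector_mult_def sum_2 trace_def mat_def

lemma minv2_right: "det M \<noteq> 0 \<Longrightarrow> M ** minv2 M = mat 1"
  by (simp add: matrix_matrix_mult_def sum_2 mat_def vec_eq_iff forall_2 divide_simps) (simp add: det_2 algebra_simps)
lemma minv2_left: "det M \<noteq> 0 \<Longrightarrow> minv2 M ** M = mat 1"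
  by (simp add: matrix_matrix_mult_def sum_2 mat_def vec_eq_iff forall_2 divide_simps) (simp add: det_2 algebra_simps)

lemma matrix_inv2: assumes "det (M::complex^2^2) \<noteq> 0" shows "matrix_inv M = minv2 M"
proof -
  have u: "A' = minv2 M" if "M ** A' = mat 1 \<and> A' ** M = mat 1" for A'
  proof -
    have "A' = A' ** (M ** minv2 M)" using minv2_right[OF assms] by (simp add: matrix_mul_rid)
    also have "\<dots> = (A' ** M) ** minv2 M" by (simp add: matrix_mul_assoc)
    also have "\<dots> = minv2 M" using that by (simp add: matrix_mul_lid)
    finally show ?thesis .
  qed
  have h: "M ** minv2 M = mat 1 \<and> minv2 M ** M = mat 1"
    using minv2_right[OF assms] minv2_left[OF assms] by blast
  show ?thesis unfolding matrix_inv_def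
    apply (rule some_equality)
     apply (rule h)
    apply (erule u)
    done
qed

lemma dv_eig: assumes "v \<noteq> 0" "dv v w = 0" shows "\<exists>\<mu>. w = \<mu> *s v"
proof (cases "v$1 = 0")
  case True
  then have "v$2 \<noteq> 0" using assms(1) vec2_nz by auto
  then show ?thesis using assms True
    by (intro exI[of _ "w$2 / v$2"]) (auto simp: vec2_eq dv_def field_simps)
next
  case False
  then show ?thesis using assms
    by (intro exI[of _ "w$1 / v$1"]) (auto simp: vec2_eq dv_def field_simps)
qed

lemma dv_smult[simp]: "dv v (\<mu> *s v) = 0"
  by (simp add: dv_def)

lemma dv_one: assumes "(v::complex^2) \<noteq> 0" shows "\<exists>u. dv v u = 1"
proof (cases "v$1 = 0")
  case True
  then have "v$2 \<noteq> 0" using assms(1) vec2_nz by auto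
  then show ?thesis using True
    by (intro exI[of _ "v2 (-1/v$2) 0"]) (simp add: dv_def)
next
  case False
  then show ?thesis
    by (intro exI[of _ "v2 0 (1/v$1)"]) (simp add: dv_def)
qed

lemma mv_smult: "(M::complex^2^2) *v (c *s v) = c *s (M *v v)"
  by (simp add: vec2_eq ent algebra_simps)

lemma cramer: fixes v w x :: "complex^2" assumes D: "dv v w \<noteq> 0"
  shows "x = (dv x w / dv v w) *s v + (dv v x / dv v w) *s w"
proof -
  have e: "x$1 * dv v w = dv x w * v$1 + dv v x * w$1" "x$2 * dv v w = dv x w * v$2 + dv v x * w$2"
    by (simp_all add: dv_def algebra_simps)
  show ?thesis using D apply (simp add: vec2_eq field_simps) using e by (simp add: algebra_simps)
qed

lemma inv_line_iff: "has_invariant_line A \<longleftrightarrow> (\<exists>v. cev A v)"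
proof
  assume "has_invariant_line A"
  then obtain W where W: "vec.subspace W" "W \<noteq> {0}" "W \<noteq> UNIV" "\<forall>i. \<forall>v\<in>W. (A $ i) *v v \<in> W"
    unfolding has_invariant_line_def by blast
  have "0 \<in> W" using W(1) vec.subspace_0 by blast
  then obtain v where v: "v \<in> W" "v \<noteq> 0" using W(2) by blast
  have "dv v (A$i *v v) = 0" for i
  proof (rule ccontr)
    let ?w = "A$i *v v"
    assume D: "dv v ?w \<noteq> 0"
    have wW: "?w \<in> W" using W(4) v(1) by blast
    have "x \<in> W" for x
    proof -
      have "x = (dv x ?w / dv v ?w) *s v + (dv v x / dv v ?w) *s ?w"
        using D by (rule cramer)
      moreover have "(dv x ?w / dv v ?w) *s v + (dv v x / dv v ?w) *s ?w \<in> W"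
        using W(1) v(1) wW by (intro vec.subspace_add vec.subspace_scale) auto
      ultimately show ?thesis by simp
    qed
    then show False using W(3) by blast
  qed
  then show "\<exists>v. cev A v" using v unfolding cev_def by blast
next
  assume "\<exists>v. cev A v"
  then obtain v where v: "v \<noteq> 0" "\<And>i. dv v (A$i *v v) = 0" unfolding cev_def by blast
  obtain u where u: "dv v u = 1" using dv_one[OF v(1)] by blast
  let ?W = "vec.span {v}"
  have "vec.subspace ?W" by (rule vec.subspace_span)
  moreover have "?W \<noteq> {0}" using vec.span_base[of v "{v}"] v(1) by auto
  moreover have "u \<notin> ?W"
  proof
    assume "u \<in> ?W"
    then obtain k where "u = k *s v" by (auto simp: vec.span_singleton)
    then show False using u by simp
  qed
  then have "?W \<noteq> UNIV" by blast
  moreover have "\<forall>i. \<forall>x\<in>?W. (A $ i) *v x \<in> ?W"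
  proof (intro allI ballI)
    fix i x assume "x \<in> ?W"
    then obtain k where k: "x = k *s v" by (auto simp: vec.span_singleton)
    obtain \<mu> where "A$i *v v = \<mu> *s v" using dv_eig[OF v(1) v(2)] by blast
    then have "A$i *v x = (k*\<mu>) *s v" using k by (simp add: mv_smult)
    then show "A$i *v x \<in> ?W" by (auto simp: vec.span_singleton)
  qed
  ultimately show "has_invariant_line A" unfolding has_invariant_line_def by blast
qed

definition mkP :: "complex^2 \<Rightarrow> complex^2 \<Rightarrow> complex^2^2" where
  "mkP v u = m2 (u$2) (-u$1) (-v$2) (v$1)"

lemma mkP_det: "dv v u = 1 \<Longrightarrow> det (mkP v u) = 1"
  by (simp add: mkP_def det_2 dv_def algebra_simps)

lemma mkP_inv: "dv v u = 1 \<Longrightarrow> minv2 (mkP v u) = m2 (v$1) (u$1) (v$2) (u$2)"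
  by (simp add: mat2_eq mkP_det) (simp add: mkP_def)

lemma mkP_21: "dv v u = 1 \<Longrightarrow> (mkP v u ** M ** minv2 (mkP v u))$2$1 = dv v (M *v v)"
  by (simp add: mkP_inv) (simp add: mkP_def ent dv_def algebra_simps)

lemma conj21: "det P \<noteq> 0 \<Longrightarrow>
  (P ** M ** minv2 P)$2$1 * det P = dv (v2 (P$2$2) (-P$2$1)) (M *v v2 (P$2$2) (-P$2$1))"
  by (simp add: ent dv_def field_simps)

lemma sim_iff: "similar_to_upper_triangular A \<longleftrightarrow> (\<exists>v. cev A v)"
proof
  assume "similar_to_upper_triangular A"
  then obtain P where P: "invertible P" "\<And>i. upper_triangular2 (P ** (A $ i) ** matrix_inv P)"
    unfolding similar_to_upper_triangular_def by blast
  have d: "det P \<noteq> 0" using P(1) invertible_det_nz by blast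
  let ?v = "v2 (P$2$2) (-P$2$1)"
  have "?v \<noteq> 0" using d by (auto simp: vec2_nz det_2)
  moreover have "dv ?v (A$i *v ?v) = 0" for i
    using conj21[OF d, of "A$i"] P(2)[of i] d
    by (simp add: upper_triangular2_def matrix_inv2)
  ultimately show "\<exists>v. cev A v" unfolding cev_def by blast
next
  assume "\<exists>v. cev A v"
  then obtain v where v: "v \<noteq> 0" "\<And>i. dv v (A$i *v v) = 0" unfolding cev_def by blast
  obtain u where u: "dv v u = 1" using dv_one[OF v(1)] by blast
  let ?P = "mkP v u"
  have "invertible ?P" using mkP_det[OF u] by (simp add: invertible_det_nz)
  moreover have "upper_triangular2 (?P ** (A $ i) ** matrix_inv ?P)" for i
    using mkP_21[OF u, of "A$i"] v(2)[of i] mkP_det[OF u]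
    by (simp add: upper_triangular2_def matrix_inv2)
  ultimately show "similar_to_upper_triangular A"
    unfolding similar_to_upper_triangular_def by blast
qed

lemma ev_exists: "\<exists>v. v \<noteq> 0 \<and> dv v (M *v v) = 0"
proof (cases "M$2$1 = 0")
  case True
  then show ?thesis
    by (intro exI[of _ "v2 1 0"]) (simp add: vec2_nz dv_def ent)
next
  case False
  define s where "s = csqrt ((M$1$1 + M$2$2)^2 - 4 * det M)"
  define l where "l = (M$1$1 + M$2$2 + s) / 2"
  have s2: "s^2 = (M$1$1 + M$2$2)^2 - 4 * det M" by (simp add: s_def)
  have q: "l^2 - (M$1$1 + M$2$2) * l + det M = 0"
    unfolding l_def using s2 by (simp add: field_simps power2_eq_square, algebra)
  have "dv (v2 (l - M$2$2) (M$2$1)) (M *v v2 (l - M$2$2) (M$2$1))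
        = M$2$1 * (l^2 - (M$1$1 + M$2$2) * l + det M)"
    by (simp add: dv_def ent det_2 power2_eq_square algebra_simps)
  then show ?thesis using False q
    by (intro exI[of _ "v2 (l - M$2$2) (M$2$1)"]) (simp add: vec2_nz)
qed

definition cj :: "complex^2^2 \<Rightarrow> complex^2^2^'n \<Rightarrow> complex^2^2^'n" where
  "cj P A = (\<chi> i. P ** A$i ** minv2 P)"

lemma cj_nth[simp]: "cj P A $ i = P ** A$i ** minv2 P"
  by (simp add: cj_def)

lemma minv2_assoc:
  assumes "det P \<noteq> 0"
  shows "minv2 P ** (P ** X) = X" "P ** (minv2 P ** X) = X"
    "minv2 P *v (P *v x) = x" "P *v (minv2 P *v x) = x"
  using minv2_left[OF assms] minv2_right[OF assms]
  by (simp_all add: matrix_mul_assoc matrix_vector_mul_assoc matrix_mul_lid)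

lemma trace_conj: "det P \<noteq> 0 \<Longrightarrow> trace (P ** M ** minv2 P) = trace M"
  by (metis matrix_mul_assoc trace_mul_sym minv2_assoc(1) matrix_mul_rid minv2_left)

lemma conj_mult: "det P \<noteq> 0 \<Longrightarrow>
  (P ** M ** minv2 P) ** (P ** N ** minv2 P) = P ** (M ** N) ** minv2 P"
  by (simp add: matrix_mul_assoc[symmetric] minv2_assoc)

lemma t_cj:
  assumes "det P \<noteq> 0"
  shows "t1 (cj P A) j = t1 A j" "t2 (cj P A) j k = t2 A j k" "t3 (cj P A) j k l = t3 A j k l"
  using assms by (simp_all add: t1_def t2_def t3_def conj_mult trace_conj)

lemma inv_cj:
  assumes "det P \<noteq> 0"
  shows "tau (cj P A) j k = tau A j k" "sigma (cj P A) j k = sigma A j k"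
    "Delta (cj P A) j k l = Delta A j k l"
  using assms by (simp_all add: tau_def sigma_def Delta_def t_cj)

lemma cev_cj:
  assumes d: "det P \<noteq> 0" and c: "cev (cj P A) u"
  shows "cev A (minv2 P *v u)"
proof -
  have u: "u \<noteq> 0" "\<And>i. dv u ((P ** A$i ** minv2 P) *v u) = 0" using c by (auto simp: cev_def)
  have "minv2 P *v u \<noteq> 0"
  proof
    assume "minv2 P *v u = 0"
    then have "P *v (minv2 P *v u) = 0" by simp
    then show False using u(1) minv2_assoc(4)[OF d] by simp
  qed
  moreover have "dv (minv2 P *v u) (A$i *v (minv2 P *v u)) = 0" for i
  proof -
    obtain \<mu> where m: "(P ** A$i ** minv2 P) *v u = \<mu> *s u" using dv_eig[OF u(1) u(2)] by blast
    have "A$i *v (minv2 P *v u) = minv2 P *v ((P ** A$i ** minv2 P) *v u)"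
      by (simp add: matrix_vector_mul_assoc[symmetric] minv2_assoc[OF d])
    also have "\<dots> = \<mu> *s (minv2 P *v u)" by (simp add: m mv_smult)
    finally show ?thesis by simp
  qed
  ultimately show ?thesis by (simp add: cev_def)
qed

lemma cev_cj2:
  assumes d: "det P \<noteq> 0" and c: "cev A v"
  shows "cev (cj P A) (P *v v)"
proof -
  have v: "v \<noteq> 0" "\<And>i. dv v (A$i *v v) = 0" using c by (auto simp: cev_def)
  have "P *v v \<noteq> 0"
  proof
    assume "P *v v = 0"
    then have "minv2 P *v (P *v v) = 0" by simp
    then show False using v(1) minv2_assoc(3)[OF d] by simp
  qed
  moreover have "dv (P *v v) ((P ** A$i ** minv2 P) *v (P *v v)) = 0" for i
  proof -
    obtain \<mu> where m: "A$i *v v = \<mu> *s v" using dv_eig[OF v(1) v(2)] by blast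
    have "(P ** A$i ** minv2 P) *v (P *v v) = P *v (A$i *v v)"
      by (simp add: matrix_vector_mul_assoc[symmetric] minv2_assoc[OF d])
    also have "\<dots> = \<mu> *s (P *v v)" by (simp add: m mv_smult)
    finally show ?thesis by simp
  qed
  ultimately show ?thesis by (simp add: cev_def)
qed

lemmas tdefs = sigma_def tau_def t1_def t2_def t3_def Delta_def

lemma I1: assumes "B$j$2$1 = 0"
  shows "sigma B j k = B$k$2$1 * dv (v2 (B$j$1$2) (B$j$2$2 - B$j$1$1)) (B$k *v v2 (B$j$1$2) (B$j$2$2 - B$j$1$1))"
  using assms by (simp add: tdefs ent dv_def power2_eq_square field_simps)

lemma I2: assumes "B$j$2$1 = 0" "B$k$2$1 = 0"
  shows "(B$j$1$1 - B$j$2$2) * (t3 B j k l - t3 B l k j) = - B$l$2$1 * dv (v2 (B$j$1$2) (B$j$2$2 - B$j$1$1)) (B$k *v v2 (B$j$1$2) (B$j$2$2 - B$j$1$1))"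
  using assms by (simp add: tdefs ent dv_def algebra_simps)

lemma I3: assumes "B$j$2$1 = 0"
  shows "tau B j j = (B$j$1$1 - B$j$2$2)^2/2"
  using assms by (simp add: tdefs ent power2_eq_square field_simps)

lemma I4: assumes "B$j$2$1 = 0" "B$j$1$1 = B$j$2$2"
  shows "tau B j k = B$j$1$2 * B$k$2$1"
  using assms by (simp add: tdefs ent field_simps)

lemma I5: assumes "\<forall>i. B$i$2$1 = 0"
  shows "sigma B j k = 0" "Delta B j k l = 0"
  using assms by (simp_all add: tdefs ent power2_eq_square field_simps)

lemma e1_dv: "dv (v2 1 0) (M *v v2 1 0) = M$2$1"
  by (simp add: dv_def ent)

lemma e1_cev: "(\<forall>i. A$i$2$1 = 0) \<Longrightarrow> cev A (v2 1 0)"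
  by (simp add: cev_def e1_dv vec2_nz)

lemma tri_conj: "\<exists>P. det P = 1 \<and> (P ** M ** minv2 P)$2$1 = 0"
proof -
  obtain v where v: "v \<noteq> 0" "dv v (M *v v) = 0" using ev_exists by blast
  obtain u where u: "dv v u = 1" using dv_one[OF v(1)] by blast
  show ?thesis using mkP_det[OF u] mkP_21[OF u, of M] v(2) by (intro exI[of _ "mkP v u"]) simp
qed

lemma scal_back:
  assumes d: "det P \<noteq> 0" and e: "P ** M ** minv2 P = mat a"
  shows "M = mat a"
proof -
  have "M = minv2 P ** (P ** M ** minv2 P) ** P"
    by (simp add: matrix_mul_assoc[symmetric] minv2_assoc[OF d] minv2_left[OF d] matrix_mul_rid)
  also have "\<dots> = mat a" unfolding e using d
    by (simp add: matrix_matrix_mult_def sum_2 mat_def vec_eq_iff forall_2 divide_simps) (simp add: det_2 algebra_simps)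
  finally show ?thesis .
qed

lemma cev_allzero:
  assumes "cev A v" shows "sigma A j k = 0" "Delta A j k l = 0"
proof -
  have v: "v \<noteq> 0" "\<And>i. dv v (A$i *v v) = 0" using assms by (auto simp: cev_def)
  obtain u where u: "dv v u = 1" using dv_one[OF v(1)] by blast
  let ?P = "mkP v u"
  have d: "det ?P \<noteq> 0" using mkP_det[OF u] by simp
  have "\<forall>i. (cj ?P A)$i$2$1 = 0" using mkP_21[OF u] v(2) by simp
  from I5[OF this] show "sigma A j k = 0" "Delta A j k l = 0" using inv_cj[OF d] by metis+
qed

lemma allzero_cev:
  assumes Z: "\<forall>j k l. sigma A j k = 0 \<and> Delta A j k l = 0"
  shows "\<exists>v. cev A v"
proof (cases "\<exists>j. tau A j j \<noteq> 0")
  case True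
  then obtain j where j: "tau A j j \<noteq> 0" by blast
  obtain P where P: "det P = 1" "(P ** A$j ** minv2 P)$2$1 = 0" using tri_conj by blast
  have d: "det P \<noteq> 0" using P by simp
  define B where "B = cj P A"
  have Bj: "B$j$2$1 = 0" using P by (simp add: B_def)
  have ZB: "sigma B j' k = 0" "Delta B j' k l = 0" for j' k l
    using Z inv_cj[OF d] unfolding B_def by metis+
  have "tau B j j \<noteq> 0" using j inv_cj[OF d] unfolding B_def by metis
  then have ad: "B$j$1$1 - B$j$2$2 \<noteq> 0" using I3[OF Bj] by auto
  define w where "w = v2 (B$j$1$2) (B$j$2$2 - B$j$1$1)"
  have wnz: "w \<noteq> 0" using ad by (auto simp: w_def vec2_nz)
  have sk: "B$k$2$1 * dv w (B$k *v w) = 0" for k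
    using I1[OF Bj, of k] ZB(1)[of j k] by (simp add: w_def)
  have "\<exists>v. cev B v"
  proof (cases "\<forall>k. B$k$2$1 = 0")
    case True
    then show ?thesis using e1_cev by blast
  next
    case False
    then obtain l where l: "B$l$2$1 \<noteq> 0" by blast
    have "dv w (B$k *v w) = 0" for k
    proof (rule ccontr)
      assume D: "dv w (B$k *v w) \<noteq> 0"
      then have rk: "B$k$2$1 = 0" using sk[of k] by simp
      have "(B$j$1$1 - B$j$2$2) * (t3 B j k l - t3 B l k j) \<noteq> 0"
        using I2[OF Bj rk, of l] D l by (simp add: w_def)
      then have "Delta B j k l \<noteq> 0" by (simp add: Delta_def)
      then show False using ZB(2) by blast
    qed
    then show ?thesis using wnz unfolding cev_def by blast
  qed
  then obtain v where "cev B v" by blast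
  then show ?thesis using cev_cj[OF d] unfolding B_def by blast
next
  case False
  then have T0: "tau A j j = 0" for j by blast
  have T: "tau A j k = 0" for j k
  proof -
    have "sigma A j k = 0" using Z by blast
    then show ?thesis using T0[of j] T0[of k] by (simp add: sigma_def)
  qed
  show ?thesis
  proof (cases "\<forall>j. A$j$1$2 = 0 \<and> A$j$2$1 = 0 \<and> A$j$1$1 = A$j$2$2")
    case True
    then show ?thesis using e1_cev by blast
  next
    case False
    then obtain j where j: "\<not> (A$j$1$2 = 0 \<and> A$j$2$1 = 0 \<and> A$j$1$1 = A$j$2$2)" by blast
    obtain P where P: "det P = 1" "(P ** A$j ** minv2 P)$2$1 = 0" using tri_conj by blast
    have d: "det P \<noteq> 0" using P by simp
    define B where "B = cj P A"
    have Bj: "B$j$2$1 = 0" using P by (simp add: B_def)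
    have TB: "tau B j' k = 0" for j' k
      using T inv_cj[OF d] unfolding B_def by metis
    have ad: "B$j$1$1 = B$j$2$2" using I3[OF Bj] TB[of j j] by simp
    have b: "B$j$1$2 \<noteq> 0"
    proof
      assume b0: "B$j$1$2 = 0"
      have "P ** A$j ** minv2 P = mat (B$j$1$1)"
        using Bj ad b0 unfolding B_def by (simp add: mat2_eq mat_def)
      then have "A$j = mat (B$j$1$1)" by (rule scal_back[OF d])
      then show False using j by (simp add: mat_def)
    qed
    have "B$k$2$1 = 0" for k using I4[OF Bj ad, of k] TB[of j k] b by simp
    then have "cev B (v2 1 0)" using e1_cev by blast
    then show ?thesis using cev_cj[OF d] unfolding B_def by blast
  qed
qed

lemma D_iff: "(\<exists>j k l. sigma A j k \<noteq> 0 \<or> Delta A j k l \<noteq> 0) \<longleftrightarrow> \<not> (\<exists>v. cev A v)"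
  using cev_allzero allzero_cev by blast

definition adj2 :: "complex^2^2 \<Rightarrow> complex^2^2" where
  "adj2 M = m2 (M$2$2) (-M$1$2) (-M$2$1) (M$1$1)"

lemma minv2_det1: "det M = 1 \<Longrightarrow> minv2 M = adj2 M"
  by (simp add: mat2_eq adj2_def)

lemma cont_if_const: "continuous_on S f \<Longrightarrow> continuous_on S g \<Longrightarrow>
  continuous_on S (\<lambda>x. if b then f x else g x)"
  by (cases b) auto

lemma cont_adj2[continuous_intros]: "continuous_on S f \<Longrightarrow> continuous_on S (\<lambda>x. adj2 (f x))"
  unfolding adj2_def m2_def by (intro continuous_intros cont_if_const)

lemma cont_mm[continuous_intros]: "continuous_on S f \<Longrightarrow> continuous_on S g \<Longrightarrow>
   continuous_on S (\<lambda>x. (f x :: complex^2^2) ** g x)"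
  unfolding matrix_matrix_mult_def by (intro continuous_intros)

lemma kern1: "dv (v2 (h$1$2) (-h$1$1)) (M *v v2 (h$1$2) (-h$1$1)) = - (h ** M ** adj2 h)$1$2"
  by (simp add: dv_def ent adj2_def algebra_simps)

lemma kern2: "dv (v2 (h$2$2) (-h$2$1)) (M *v v2 (h$2$2) (-h$2$1)) = (h ** M ** adj2 h)$2$1"
  by (simp add: dv_def ent adj2_def algebra_simps)

lemma kernel_cev:
  assumes h: "h \<noteq> 0" and z: "\<And>i. h ** A$i ** adj2 h = 0"
  shows "\<exists>p. cev A p"
proof (cases "h$1$1 \<noteq> 0 \<or> h$1$2 \<noteq> 0")
  case True
  then have "cev A (v2 (h$1$2) (-h$1$1))"
    unfolding cev_def using z by (auto simp: kern1 vec2_nz)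
  then show ?thesis by blast
next
  case False
  then have "h$2$1 \<noteq> 0 \<or> h$2$2 \<noteq> 0" using h by (auto simp: mat2_eq)
  then have "cev A (v2 (h$2$2) (-h$2$1))"
    unfolding cev_def using z by (auto simp: kern2 vec2_nz)
  then show ?thesis by blast
qed

lemma homog: "(c *\<^sub>R h) ** M ** adj2 (c *\<^sub>R h) = (c^2) *\<^sub>R (h ** M ** adj2 h)"
  by (simp add: mat2_eq ent adj2_def) (simp add: scaleR_conv_of_real power2_eq_square algebra_simps)

lemma norm_sum_le: "(\<Sum>i\<in>UNIV. norm ((x::'a::real_normed_vector^'n)$i)) \<le> real CARD('n) * norm x"
proof -
  have "(\<Sum>i\<in>UNIV. norm (x$i)) \<le> (\<Sum>i\<in>(UNIV::'n set). norm x)" by (rule sum_mono) (simp add: Finite_Cartesian_Product.norm_nth_le)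
  then show ?thesis by simp
qed

lemma closed_SL2: "closed SL2"
proof -
  have "SL2 = {g::complex^2^2. g$1$1*g$2$2 - g$1$2*g$2$1 = 1}" by (simp add: SL2_def det_2)
  also have "closed \<dots>" by (intro closed_Collect_eq continuous_intros)
  finally show ?thesis .
qed

lemma conj_SL2: "g \<in> SL2 \<Longrightarrow> conj_act g A = (\<chi> i. g ** A$i ** adj2 g)"
  by (simp add: SL2_def conj_act_def matrix_inv2 minv2_det1)

lemma irr_stable:
  fixes A :: "complex^2^2^'n"
  assumes irr: "\<not> (\<exists>v. cev A v)"
  shows "stable A"
proof -
  define \<phi> where "\<phi> h = (\<Sum>i\<in>UNIV. norm (h ** A$i ** adj2 h))" for h
  have c\<phi>: "continuous_on (sphere 0 1) \<phi>" unfolding \<phi>_def by (intro continuous_intros)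
  have ne: "sphere (0::complex^2^2) 1 \<noteq> {}" by simp
  obtain h0 where h0: "h0 \<in> sphere 0 1" "\<And>h. h \<in> sphere 0 1 \<Longrightarrow> \<phi> h0 \<le> \<phi> h"
    using continuous_attains_inf[OF compact_sphere ne c\<phi>] by blast
  define m where "m = \<phi> h0"
  have m0: "m > 0"
  proof -
    have ge: "m \<ge> 0" unfolding m_def \<phi>_def by (simp add: sum_nonneg)
    have "m \<noteq> 0"
    proof
      assume "m = 0"
      then have "\<forall>i\<in>UNIV. norm (h0 ** A$i ** adj2 h0) = 0"
        unfolding m_def \<phi>_def by (subst sum_nonneg_eq_0_iff[symmetric]) auto
      then have "h0 ** A$i ** adj2 h0 = 0" for i by simp
      moreover have "h0 \<noteq> 0" using h0(1) by auto
      ultimately show False using kernel_cev irr by blast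
    qed
    then show ?thesis using ge by simp
  qed
  have key: "(norm g)^2 * m \<le> real CARD('n) * norm (conj_act g A)" if g: "g \<in> SL2" for g
  proof -
    have "g \<noteq> 0" using g by (auto simp: SL2_def det_2)
    then have ng: "norm g > 0" by simp
    define h where "h = (1 / norm g) *\<^sub>R g"
    have hs: "h \<in> sphere 0 1" using ng by (simp add: h_def)
    have gh: "norm g *\<^sub>R h = g" using ng by (simp add: h_def)
    have e: "norm ((conj_act g A)$i) = (norm g)^2 * norm (h ** A$i ** adj2 h)" for i
    proof -
      have "(conj_act g A)$i = g ** A$i ** adj2 g" using conj_SL2[of g A] g by simp
      also have "\<dots> = (norm g)^2 *\<^sub>R (h ** A$i ** adj2 h)"
        using homog[of "norm g" h "A$i", unfolded gh] .
      finally show ?thesis by simp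
    qed
    have "(norm g)^2 * m \<le> (norm g)^2 * \<phi> h" using h0(2)[OF hs] unfolding m_def
      by (simp add: mult_left_mono)
    also have "\<dots> = (\<Sum>i\<in>UNIV. norm ((conj_act g A)$i))"
      unfolding \<phi>_def e by (simp add: sum_distrib_left)
    also have "\<dots> \<le> real CARD('n) * norm (conj_act g A)" by (rule norm_sum_le)
    finally show ?thesis .
  qed
  have contF: "continuous_on SL2 (\<lambda>g. conj_act g A)"
  proof (rule continuous_on_eq)
    show "continuous_on SL2 (\<lambda>g. \<chi> i. g ** A$i ** adj2 g)" by (intro continuous_intros)
    show "\<And>x. x \<in> SL2 \<Longrightarrow> (\<chi> i. x ** A $ i ** adj2 x) = conj_act x A"
      using conj_SL2 by metis
  qed
  show ?thesis unfolding stable_def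
  proof (rule compact_imp_proper_map)
    show "k_space (euclidean :: (complex^2^2^'n) topology)" by (rule k_space_euclideanreal)
    show "kc_space (euclidean :: (complex^2^2^'n) topology)"
      by (rule Hausdorff_imp_kc_space[OF Hausdorff_space_euclidean])
    show "(\<lambda>g. conj_act g A) \<in> topspace (top_of_set SL2) \<rightarrow> topspace euclidean" by simp
    show "continuous_map (top_of_set SL2) euclidean (\<lambda>g. conj_act g A) \<or> kc_space (top_of_set SL2)"
      by (intro disjI2 kc_space_subtopology Hausdorff_imp_kc_space[OF Hausdorff_space_euclidean])
    fix K :: "(complex^2^2^'n) set"
    assume "compactin euclidean K"
    then have K: "compact K" by simp
    then obtain R where R: "\<And>x. x \<in> K \<Longrightarrow> norm x \<le> R"
      using compact_imp_bounded bounded_iff by metis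
    let ?T = "{x \<in> topspace (top_of_set SL2). conj_act x A \<in> K}"
    have T: "?T = SL2 \<inter> (\<lambda>g. conj_act g A) -` K" by auto
    have cl: "closed ?T" unfolding T
      by (rule continuous_closed_preimage[OF contF closed_SL2 compact_imp_closed[OF K]])
    have bd: "bounded ?T"
      unfolding bounded_iff
    proof (intro exI ballI)
      fix g assume "g \<in> ?T"
      then have g: "g \<in> SL2" "conj_act g A \<in> K" by auto
      have "(norm g)^2 * m \<le> real CARD('n) * R"
        using key[OF g(1)] R[OF g(2)] by (meson mult_left_mono of_nat_0_le_iff order_trans)
      then have "(norm g)^2 \<le> real CARD('n) * R / m" using m0 by (simp add: field_simps)
      moreover have "norm g \<le> 1 + (norm g)^2"
      proof -
        have "0 \<le> (norm g - 1)^2" by simp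
        then have "2 * norm g \<le> (norm g)^2 + 1" unfolding power2_diff by simp
        moreover have "0 \<le> norm g" by simp
        ultimately show ?thesis by linarith
      qed
      ultimately show "norm g \<le> 1 + real CARD('n) * R / m" by simp
    qed
    have "compact ?T" using cl bd by (simp add: compact_eq_bounded_closed)
    then show "compactin (top_of_set SL2) ?T" by (auto simp: compactin_subtopology)
  qed
qed

definition gt :: "complex^2 \<Rightarrow> complex^2 \<Rightarrow> real \<Rightarrow> complex^2^2" where
  "gt v u t = m2 (of_real t * u$2) (- (of_real t * u$1)) (- v$2 / of_real t) (v$1 / of_real t)"

lemma gt_det: "dv v u = 1 \<Longrightarrow> t \<noteq> 0 \<Longrightarrow> det (gt v u t) = 1"
  by (simp add: gt_def det_2 dv_def field_simps)

lemma gt_conj: assumes "dv v u = 1" "t \<noteq> 0"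
  shows "gt v u t ** M ** matrix_inv (gt v u t) =
    m2 (u$2 * (M *v v)$1 - u$1 * (M *v v)$2)
       (of_real t ^2 * (u$2 * (M *v u)$1 - u$1 * (M *v u)$2))
       (dv v (M *v v) / of_real t^2)
       (v$1 * (M *v u)$2 - v$2 * (M *v u)$1)"
  using assms gt_det[OF assms]
  apply (simp add: matrix_inv2 minv2_det1)
  apply (simp add: mat2_eq ent adj2_def gt_def dv_def field_simps power2_eq_square)
  done

lemma norm_le_sum: "norm (x::'a::real_normed_vector^'n) \<le> (\<Sum>i\<in>UNIV. norm (x$i))"
  by (simp add: norm_vec_def L2_set_le_sum)

lemma norm_m2: "norm (m2 a b c d) \<le> norm a + norm b + norm c + norm d"
proof -
  have "norm (m2 a b c d) \<le> norm (m2 a b c d $ 1) + norm (m2 a b c d $ 2)"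
    using norm_le_sum[of "m2 a b c d"] by (simp add: sum_2)
  also have "norm (m2 a b c d $ 1) \<le> norm a + norm b"
    using norm_le_sum[of "m2 a b c d $ 1"] by (simp add: sum_2)
  also have "norm (m2 a b c d $ 2) \<le> norm c + norm d"
    using norm_le_sum[of "m2 a b c d $ 2"] by (simp add: sum_2)
  finally show ?thesis by simp
qed

lemma red_not_stable:
  fixes A :: "complex^2^2^'n"
  assumes "cev A v"
  shows "\<not> stable A"
proof
  assume st: "stable A"
  have v: "v \<noteq> 0" "\<And>i. dv v (A$i *v v) = 0" using assms by (auto simp: cev_def)
  obtain u where u: "dv v u = 1" using dv_one[OF v(1)] by blast
  define \<alpha> where "\<alpha> i = u$2 * (A$i *v v)$1 - u$1 * (A$i *v v)$2" for i
  define \<beta> where "\<beta> i = u$2 * (A$i *v u)$1 - u$1 * (A$i *v u)$2" for i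
  define \<gamma> where "\<gamma> i = v$1 * (A$i *v u)$2 - v$2 * (A$i *v u)$1" for i
  define R where "R = (\<Sum>i\<in>UNIV. norm (\<alpha> i) + norm (\<beta> i) + norm (\<gamma> i))"
  have inS: "gt v u t \<in> SL2 \<and> conj_act (gt v u t) A \<in> cball 0 R" if t: "0 < t" "t \<le> 1" for t
  proof
    have t0: "t \<noteq> 0" using t by simp
    show "gt v u t \<in> SL2" using gt_det[OF u t0] by (simp add: SL2_def)
    have e: "conj_act (gt v u t) A = (\<chi> i. m2 (\<alpha> i) (of_real t ^2 * \<beta> i) 0 (\<gamma> i))"
      unfolding conj_act_def using gt_conj[OF u t0] v(2) by (simp add: \<alpha>_def \<beta>_def \<gamma>_def)
    have bd: "norm (m2 (\<alpha> i) (of_real t ^2 * \<beta> i) 0 (\<gamma> i)) \<le> norm (\<alpha> i) + norm (\<beta> i) + norm (\<gamma> i)" for i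
    proof -
      have "norm (of_real t ^2 * \<beta> i) \<le> norm (\<beta> i)"
        using t by (simp add: norm_mult norm_power power_le_one mult_left_le_one_le)
      then show ?thesis using norm_m2[of "\<alpha> i" "of_real t ^2 * \<beta> i" 0 "\<gamma> i"] by simp
    qed
    have "norm (conj_act (gt v u t) A) \<le> (\<Sum>i\<in>UNIV. norm (m2 (\<alpha> i) (of_real t ^2 * \<beta> i) 0 (\<gamma> i)))"
      using norm_le_sum[of "conj_act (gt v u t) A"] unfolding e by simp
    also have "\<dots> \<le> R" unfolding R_def by (rule sum_mono) (rule bd)
    finally show "conj_act (gt v u t) A \<in> cball 0 R" by simp
  qed
  have "compactin (top_of_set SL2) {x \<in> topspace (top_of_set SL2). conj_act x A \<in> cball 0 R}"
    by (rule compactin_proper_map_preimage[OF st[unfolded stable_def]]) simp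
  then have "compact {x \<in> SL2. conj_act x A \<in> cball 0 R}" by (simp add: compactin_subtopology)
  then obtain B where B: "\<And>x. x \<in> SL2 \<Longrightarrow> conj_act x A \<in> cball 0 R \<Longrightarrow> norm x \<le> B"
    using compact_imp_bounded bounded_iff by (metis (no_types, lifting) mem_Collect_eq)
  define c where "c = norm (v$1) + norm (v$2)"
  have c0: "c > 0" using v(1) by (auto simp: c_def vec2_nz add_pos_nonneg add_nonneg_pos)
  define t where "t = c / (2 * \<bar>B\<bar> + c + 1)"
  have t: "0 < t" "t \<le> 1" using c0 by (auto simp: t_def field_simps)
  have nB: "norm (gt v u t) \<le> B" using inS[OF t] B by blast
  have n21: "norm (gt v u t $ 2 $ 1) \<le> B" "norm (gt v u t $ 2 $ 2) \<le> B"
    using nB Finite_Cartesian_Product.norm_nth_le[of "gt v u t $ 2" 1] Finite_Cartesian_Product.norm_nth_le[of "gt v u t $ 2" 2]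
      Finite_Cartesian_Product.norm_nth_le[of "gt v u t" 2] by linarith+
  have "norm (gt v u t $ 2 $ 1) + norm (gt v u t $ 2 $ 2) = c / t"
    using t by (simp add: gt_def norm_divide c_def add_divide_distrib)
  also have "\<dots> = 2 * \<bar>B\<bar> + c + 1" using c0 by (simp add: t_def)
  finally show False using n21 c0 abs_ge_self[of B] by linarith
qed

lemma triple_nth: "triple A j k l $ 1 = A$j" "triple A j k l $ 2 = A$k" "triple A j k l $ 3 = A$l"
  by (simp_all add: triple_def)

lemma triple_inv: "sigma (triple A j k l) 1 2 = sigma A j k" "Delta (triple A j k l) 1 2 3 = Delta A j k l"
  by (simp_all add: sigma_def tau_def t1_def t2_def Delta_def t3_def triple_nth)

lemma cev_triple: "cev A v \<Longrightarrow> cev (triple A j k l) v"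
  unfolding cev_def triple_def by auto

lemma stable_iff: "stable A \<longleftrightarrow> \<not> (\<exists>v. cev A v)"
  using irr_stable red_not_stable by blast

theorem theorem3p3:
  fixes A :: "complex^2^2^'n"
  shows "(stable A \<longleftrightarrow> (\<exists>j k l. stable (triple A j k l)))
       \<and> (stable A \<longleftrightarrow> (\<exists>j k l. sigma A j k \<noteq> 0 \<or> Delta A j k l \<noteq> 0))
       \<and> (stable A \<longleftrightarrow> \<not> similar_to_upper_triangular A)
       \<and> (stable A \<longleftrightarrow> \<not> has_invariant_line A)"
proof (intro conjI)
  show "stable A \<longleftrightarrow> (\<exists>j k l. stable (triple A j k l))"
  proof
    assume "stable A"
    then obtain j k l where "sigma A j k \<noteq> 0 \<or> Delta A j k l \<noteq> 0"
      using stable_iff[of A] D_iff[of A] by blast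
    then have "sigma (triple A j k l) 1 2 \<noteq> 0 \<or> Delta (triple A j k l) 1 2 3 \<noteq> 0"
      by (simp add: triple_inv)
    then have "stable (triple A j k l)" using stable_iff[of "triple A j k l"] D_iff[of "triple A j k l"] by blast
    then show "\<exists>j k l. stable (triple A j k l)" by blast
  next
    assume "\<exists>j k l. stable (triple A j k l)"
    then obtain j k l where "stable (triple A j k l)" by blast
    then have "\<not> (\<exists>v. cev (triple A j k l) v)" using stable_iff[of "triple A j k l"] by blast
    then show "stable A" using stable_iff[of A] cev_triple[of A _ j k l] by blast
  qed
  show "stable A \<longleftrightarrow> (\<exists>j k l. sigma A j k \<noteq> 0 \<or> Delta A j k l \<noteq> 0)"
    using stable_iff D_iff by blast
  show "stable A \<longleftrightarrow> \<not> similar_to_upper_triangular A"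
    using stable_iff sim_iff by blast
  show "stable A \<longleftrightarrow> \<not> has_invariant_line A"
    using stable_iff inv_line_iff by blast
qed

end
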